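(* Let $p$ be an odd prime, $t,s$ positive integers, $r=p^t$, $q=r^s$, $T=q+1$, $\eta$ the quadratic multiplicative character of $\mathbb{F}_r$ (with $\eta(0)=0$), $D=\{x\in\mathbb{F}_{q^2}:\eta(\mathrm{Tr}_{q/r}(x^T))=-1\}$, $K=\#D$, and for $a\in\mathbb{F}_{q^2}$ let $\mathbf{c}_a=\frac{1}{\sqrt K}(\zeta_p^{\mathrm{Tr}_{q^2/p}(ax)})_{x\in D}$ with $\zeta_p=e^{2\pi i/p}$. Then $$I_{max}=\max_{a\neq a'\in\mathbb{F}_{q^2}}|\mathbf{c}_a\mathbf{c}_{a'}^H|\leq\frac{1}{K}\cdot\frac{r+1}{2r}\,q.$$
   Context: $\mathrm{Tr}_{q/r}$ is the trace from $\mathbb{F}_q$ to $\mathbb{F}_r$, $\mathrm{Tr}_{q^2/p}$ the absolute trace of $\mathbb{F}_{q^2}$; $\mathbf{c}^H$ is the conjugate transpose. *)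

theory Defs
  imports "HOL-Analysis.Analysis"
begin

text \<open>The ambient field F_{q^2} is a finite field type 'a. Subfields are
  F_m = {x. x ^ m = x} for m a power of the characteristic dividing appropriately.\<close>

definition rel_trace :: "nat \<Rightarrow> nat \<Rightarrow> 'a::field \<Rightarrow> 'a" where
  "rel_trace r s y = (\<Sum>i<s. y ^ (r ^ i))"

definition abs_trace :: "nat \<Rightarrow> nat \<Rightarrow> 'a::field \<Rightarrow> 'a" where
  "abs_trace p n x = (\<Sum>i<n. x ^ (p ^ i))"

definition prime_field_nat :: "nat \<Rightarrow> 'a::field \<Rightarrow> nat" where
  "prime_field_nat p z = (THE k. k < p \<and> of_nat k = z)"

definition quad_char :: "nat \<Rightarrow> 'a::field \<Rightarrow> int" where
  "quad_char r y = (if y = 0 then 0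
      else if (\<exists>z. z ^ r = z \<and> z ^ 2 = y) then 1 else -1)"

definition zeta_pow :: "nat \<Rightarrow> nat \<Rightarrow> complex" where
  "zeta_pow p k = exp (2 * pi * \<i> * of_nat k / of_nat p)"

end

theory Submission
  imports Defs "HOL-Computational_Algebra.Primes" "HOL-Computational_Algebra.Polynomial"
begin

lemma roots_sum_monom_bound:
  fixes c :: "nat \<Rightarrow> 'a::{field}"
  assumes "finite E" "d \<in> E" "\<forall>e\<in>E. e \<le> d" "c d \<noteq> 0"
  shows "card {x::'a. (\<Sum>e\<in>E. c e * x ^ e) = 0} \<le> d"
proof -
  define P where "P = (\<Sum>e\<in>E. monom (c e) e)"
  have ev: "poly P x = (\<Sum>e\<in>E. c e * x ^ e)" for x
    unfolding P_def by (simp add: poly_sum poly_monom)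
  have co: "coeff P k = (if k \<in> E then c k else 0)" for k
  proof -
    have "coeff P k = (\<Sum>e\<in>E. if e = k then c e else 0)"
      unfolding P_def coeff_sum coeff_monom by simp
    also have "\<dots> = (if k \<in> E then c k else 0)"
      using assms(1) by simp
    finally show ?thesis .
  qed
  have "P \<noteq> 0" using co[of d] assms by auto
  have "degree P \<le> d"
    by (rule degree_le) (use co assms in auto)
  have "card {x. poly P x = 0} \<le> degree P" by (rule card_poly_roots_bound) fact
  then show ?thesis using \<open>degree P \<le> d\<close> ev by simp
qed

lemma fermat_field:
  fixes x :: "'a :: {field,finite}"
  shows   "x ^ CARD('a) = x"
proof (cases "x = 0")
  case False
  have "x * (\<Prod>y\<in>UNIV-{0}. x * y) = x * x ^ (card (UNIV :: 'a set) - 1) * \<Prod>(UNIV-{0})"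
    by (simp add: prod.distrib mult_ac)
  also have "x * x ^ (card (UNIV :: 'a set) - 1) = x ^ Suc (card (UNIV :: 'a set) - 1)"
    by (subst power_Suc) auto
  also have "Suc (card (UNIV :: 'a set) - 1) = card (UNIV :: 'a set)"
    using finite_UNIV_card_ge_0[where ?'a = 'a] by simp
  also have "(\<Prod>y\<in>UNIV-{0}. x * y) = (\<Prod>y\<in>UNIV-{0}. y)"
    by (rule prod.reindex_bij_witness[of _ "\<lambda>y. y / x" "\<lambda>y. x * y"]) (use False in auto)
  finally have "x * \<Prod>(UNIV-{0}) = x ^ CARD('a) * \<Prod>(UNIV-{0})" by simp
  moreover have "\<Prod>(UNIV-{0::'a}) \<noteq> 0" by (simp)
  ultimately show ?thesis by simp
next
  case True
  then show ?thesis using finite_UNIV_card_ge_0[where ?'a = 'a] by (simp add: power_0_left)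
qed

lemma card_by_fibres:
  assumes "finite A" "\<And>y. y \<in> f ` A \<Longrightarrow> card {x\<in>A. f x = y} = k"
  shows "card A = card (f ` A) * k"
proof -
  have "card A = (\<Sum>y\<in>f ` A. card {x\<in>A. f x = y})"
    using sum.image_gen[OF assms(1), of "\<lambda>_. 1::nat" f] by simp
  also have "\<dots> = (\<Sum>y\<in>f ` A. k)" using assms(2) by simp
  finally show ?thesis by simp
qed

lemma sum_by_fibres:
  assumes "finite A"
  shows "(\<Sum>x\<in>A. g (f x)) = (\<Sum>y\<in>f ` A. of_nat (card {x\<in>A. f x = y}) * g y)"
proof -
  have "(\<Sum>x\<in>A. g (f x)) = (\<Sum>y\<in>f ` A. \<Sum>x\<in>{x\<in>A. f x = y}. g (f x))"
    by (rule sum.image_gen[OF assms(1)])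
  also have "\<dots> = (\<Sum>y\<in>f ` A. \<Sum>x\<in>{x\<in>A. f x = y}. g y)"
    by (intro sum.cong) auto
  also have "\<dots> = (\<Sum>y\<in>f ` A. of_nat (card {x\<in>A. f x = y}) * g y)"
    by simp
  finally show ?thesis .
qed

lemma roots_trace_bound:
  fixes M j :: nat
  assumes "M > 1" "j > 0"
  shows "card {x::'a::field. (\<Sum>i<j. x ^ (M ^ i)) = 0} \<le> M ^ (j - 1)"
proof -
  have inj: "inj_on (\<lambda>i. M ^ i) {..<j}"
    using assms(1) by (auto simp: inj_on_def power_inject_exp)
  have eq: "(\<Sum>i<j. x ^ (M ^ i)) = (\<Sum>e\<in>(\<lambda>i. M ^ i) ` {..<j}. (\<lambda>_. 1::'a) e * x ^ e)" for x
    by (simp add: sum.reindex[OF inj])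
  have "card {x::'a. (\<Sum>e\<in>(\<lambda>i. M ^ i) ` {..<j}. (\<lambda>_. 1::'a) e * x ^ e) = 0} \<le> M ^ (j - 1)"
  proof (rule roots_sum_monom_bound)
    show "M ^ (j - 1) \<in> (\<lambda>i. M ^ i) ` {..<j}" using assms by auto
    show "\<forall>e\<in>(\<lambda>i. M ^ i) ` {..<j}. e \<le> M ^ (j - 1)"
      using assms by (auto intro!: power_increasing)
  qed auto
  then show ?thesis unfolding eq .
qed

lemma roots_binom_bound:
  fixes M :: nat and a :: "'a::field"
  assumes "M > 1"
  shows "card {x::'a. x ^ M = a * x} \<le> M"
proof -
  have eq: "(x ^ M = a * x) \<longleftrightarrow> (\<Sum>e\<in>{1, M}. (\<lambda>e. if e = 1 then - a else 1) e * x ^ e) = 0" for x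
    using assms by (auto simp: algebra_simps)
  have "card {x::'a. (\<Sum>e\<in>{1, M}. (\<lambda>e. if e = 1 then - a else 1) e * x ^ e) = 0} \<le> M"
    by (rule roots_sum_monom_bound) (use assms in auto)
  then show ?thesis unfolding eq .
qed

lemma roots_unity_bound:
  fixes M :: nat
  assumes "M > 0"
  shows "card {x::'a::field. x ^ M = 1} \<le> M"
proof -
  have eq: "(x ^ M = 1) \<longleftrightarrow> (\<Sum>e\<in>{0, M}. (\<lambda>e. if e = 0 then - 1 else 1::'a) e * x ^ e) = 0" for x
    using assms by (auto simp: algebra_simps)
  have "card {x::'a. (\<Sum>e\<in>{0, M}. (\<lambda>e. if e = 0 then - 1 else 1::'a) e * x ^ e) = 0} \<le> M"
    by (rule roots_sum_monom_bound) (use assms in auto)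
  then show ?thesis unfolding eq .
qed

definition sub :: "nat \<Rightarrow> 'a::field set" where "sub m = {x. x ^ m = x}"

locale ffield =
  fixes p n :: nat and TY :: "'a::{field,finite} itself"
  assumes prime_p: "prime p" and odd_p: "odd p" and n_pos: "n > 0"
    and char_p: "CHAR('a) = p" and card_a: "CARD('a) = p ^ n"
begin

lemma prime_char: "prime CHAR('a)" using prime_p char_p by simp

lemma p_gt1: "p > 1" using prime_p prime_gt_1_nat by blast
lemma p_ge3: "p \<ge> 3" using p_gt1 odd_p by presburger

lemma frob_add: "((x::'a) + y) ^ (p ^ k) = x ^ (p ^ k) + y ^ (p ^ k)"
  using freshmans_dream'[OF prime_char, of "p ^ k" k x y] char_p by simp

lemma frob_sum: "(sum (f :: 'b \<Rightarrow> 'a) A) ^ (p ^ k) = (\<Sum>i\<in>A. f i ^ (p ^ k))"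
  using freshmans_dream_sum'[OF prime_char, of "p ^ k" k f A] char_p by simp

lemma frob_neg: "(- (x::'a)) ^ (p ^ k) = - (x ^ (p ^ k))"
proof -
  have "(x + (- x)) ^ (p ^ k) = x ^ (p ^ k) + (- x) ^ (p ^ k)" by (rule frob_add)
  then have "0 = x ^ (p ^ k) + (- x) ^ (p ^ k)"
    using p_gt1 by (simp add: power_0_left)
  then show ?thesis by (simp add: eq_neg_iff_add_eq_0 add.commute)
qed

lemma frob_diff: "((x::'a) - y) ^ (p ^ k) = x ^ (p ^ k) - y ^ (p ^ k)"
  using frob_add[of x "- y" k] frob_neg[of y k] by simp

lemma fermat: "(x::'a) ^ (p ^ n) = x"
  using fermat_field[of x] card_a by simp

lemma pow_iter: "(x::'a) ^ M = x \<Longrightarrow> x ^ (M ^ j) = x"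
  by (induction j) (simp_all add: power_mult[symmetric] power_Suc2 power_mult mult.commute)

lemma pow_iter': "(x::'a) ^ M = x \<Longrightarrow> x ^ (M ^ j * N) = x ^ N"
  by (metis pow_iter power_mult)

lemma fermat_dvd: assumes "k dvd n" shows "(x::'a) ^ (p ^ k) ^ (n div k) = x"
proof -
  have "(p ^ k) ^ (n div k) = p ^ n" using assms by (simp add: power_mult[symmetric])
  then show ?thesis using fermat by simp
qed

lemma sub_UNIV: "sub (p ^ n) = (UNIV :: 'a set)"
  using fermat by (auto simp: sub_def)

lemma sub_0: "(0::'a) \<in> sub (p ^ k)" using p_gt1 by (simp add: sub_def)
lemma sub_1: "(1::'a) \<in> sub m" by (simp add: sub_def)
lemma sub_add: "a \<in> sub (p ^ k) \<Longrightarrow> b \<in> sub (p ^ k) \<Longrightarrow> (a::'a) + b \<in> sub (p ^ k)"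
  by (simp add: sub_def frob_add)
lemma sub_neg: "a \<in> sub (p ^ k) \<Longrightarrow> - (a::'a) \<in> sub (p ^ k)"
  by (simp add: sub_def frob_neg)
lemma sub_diff: "a \<in> sub (p ^ k) \<Longrightarrow> b \<in> sub (p ^ k) \<Longrightarrow> (a::'a) - b \<in> sub (p ^ k)"
  by (simp add: sub_def frob_diff)
lemma sub_mult: "a \<in> sub m \<Longrightarrow> b \<in> sub m \<Longrightarrow> (a::'a) * b \<in> sub m"
  by (simp add: sub_def power_mult_distrib)
lemma sub_inverse: "a \<in> sub m \<Longrightarrow> inverse (a::'a) \<in> sub m"
  by (simp add: sub_def power_inverse)
lemma sub_divide: "a \<in> sub m \<Longrightarrow> b \<in> sub m \<Longrightarrow> (a::'a) / b \<in> sub m"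
  by (simp add: sub_def power_divide)
lemma sub_power: "a \<in> sub m \<Longrightarrow> (a::'a) ^ j \<in> sub m"
  by (simp add: sub_def flip: power_mult) (metis mult.commute power_mult)
lemma sub_of_nat: "(of_nat j :: 'a) \<in> sub (p ^ k)"
  by (induction j) (simp_all add: sub_0 sub_add sub_1)

lemma sub_mono: "(a::'a) \<in> sub M \<Longrightarrow> a \<in> sub (M ^ j)"
  by (simp add: sub_def pow_iter)

lemma card_sub:
  assumes "k > 0" "k dvd n"
  shows "card (sub (p ^ k) :: 'a set) = p ^ k"
proof -
  define M where "M = p ^ k"
  define j where "j = n div k"
  have M1: "M > 1" unfolding M_def using p_gt1 assms(1) by (metis one_less_power)
  have Mj: "M ^ j = p ^ n" unfolding M_def j_def using assms by (simp add: power_mult[symmetric])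
  have j0: "j > 0" unfolding j_def using assms n_pos by (auto elim!: dvdE)
  define f where "f = (\<lambda>x::'a. x ^ M - x)"
  have fadd: "f (x + y) = f x + f y" for x y unfolding f_def M_def by (simp add: frob_add)
  have fdiff: "f (x - y) = f x - f y" for x y unfolding f_def M_def by (simp add: frob_diff)
  have ker: "sub M = {x. f x = 0}" unfolding sub_def f_def by auto
  have fib: "card {x\<in>UNIV. f x = y} = card (sub M :: 'a set)" if "y \<in> f ` UNIV" for y
  proof -
    from that obtain x0 where y: "y = f x0" by auto
    have "{x\<in>UNIV. f x = y} = (\<lambda>z. x0 + z) ` sub M"
    proof (intro equalityI subsetI)
      fix x assume "x \<in> {x\<in>UNIV. f x = y}"
      then have "f (x - x0) = 0" using y fdiff by simp
      then show "x \<in> (\<lambda>z. x0 + z) ` sub M" using ker by (intro image_eqI[of _ _ "x - x0"]) auto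
    next
      fix x assume "x \<in> (\<lambda>z. x0 + z) ` sub M"
      then show "x \<in> {x\<in>UNIV. f x = y}" using ker y fadd by auto
    qed
    moreover have "inj_on (\<lambda>z. x0 + z) (sub M)" by (auto simp: inj_on_def)
    ultimately show ?thesis by (simp add: card_image)
  qed
  have cardU: "p ^ n = card (f ` UNIV) * card (sub M :: 'a set)"
    using card_by_fibres[of "UNIV :: 'a set" f "card (sub M :: 'a set)"] fib card_a by simp
  have img: "f ` UNIV \<subseteq> {y. (\<Sum>i<j. y ^ (M ^ i)) = 0}"
  proof
    fix y assume "y \<in> f ` UNIV"
    then obtain x where y: "y = x ^ M - x" unfolding f_def by auto
    have "(\<Sum>i<j. y ^ (M ^ i)) = (\<Sum>i<j. x ^ (M ^ Suc i) - x ^ (M ^ i))"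
      unfolding y M_def by (intro sum.cong refl) (simp add: frob_diff power_mult[symmetric] mult.commute power_Suc)
    also have "\<dots> = x ^ (M ^ j) - x ^ (M ^ 0)" by (rule sum_lessThan_telescope)
    also have "\<dots> = 0" using Mj fermat by simp
    finally show "y \<in> {y. (\<Sum>i<j. y ^ (M ^ i)) = 0}" by simp
  qed
  have c1: "card (f ` UNIV) \<le> M ^ (j - 1)"
    by (rule order.trans[OF card_mono[OF _ img] roots_trace_bound[OF M1 j0]]) simp
  have c2: "card (sub M :: 'a set) \<le> M"
    using roots_binom_bound[OF M1, of "1::'a"] by (simp add: sub_def)
  have "M ^ j = M * M ^ (j - 1)" using j0 by (cases j) auto
  then have "M * M ^ (j - 1) \<le> M ^ (j - 1) * card (sub M :: 'a set)"
    using cardU Mj c1 by (metis mult.commute mult_le_mono1)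
  then have "M \<le> card (sub M :: 'a set)" using M1 by (simp add: mult.commute)
  then show ?thesis using c2 M_def by simp
qed

lemma finite_sub: "finite (sub m :: 'a set)" by simp

end

context ffield
begin

lemma of_nat_inj_p: "inj_on (of_nat :: nat \<Rightarrow> 'a) {..<p}"
proof (rule inj_onI)
  fix a b assume ab: "a \<in> {..<p}" "b \<in> {..<p}" "(of_nat a :: 'a) = of_nat b"
  show "a = b"
  proof (rule ccontr)
    assume "a \<noteq> b"
    then consider "a < b" | "b < a" by linarith
    then show False
    proof cases
      case 1
      then have "p dvd (b - a)" using ab of_nat_eq_iff_char_dvd[OF 1, where 'a='a] char_p by simp
      then show False using 1 ab by (auto dest: dvd_imp_le)
    next
      case 2
      then have "p dvd (a - b)" using ab of_nat_eq_iff_char_dvd[OF 2, where 'a='a] char_p by simp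
      then show False using 2 ab by (auto dest: dvd_imp_le)
    qed
  qed
qed

lemma sub_p: "sub p = (of_nat ` {..<p} :: 'a set)"
proof -
  have "card (sub (p ^ 1) :: 'a set) = p ^ 1" by (rule card_sub) (use n_pos in auto)
  then have c: "card (sub p :: 'a set) = p" by simp
  have s: "of_nat ` {..<p} \<subseteq> (sub p :: 'a set)" using sub_of_nat[of _ 1] by auto
  have "card (of_nat ` {..<p} :: 'a set) = p" using card_image[OF of_nat_inj_p] by simp
  then show ?thesis using card_subset_eq[OF finite_sub s] c by simp
qed

lemma pfn_of_nat: "k < p \<Longrightarrow> prime_field_nat p (of_nat k :: 'a) = k"
  unfolding prime_field_nat_def
  by (rule the_equality) (use of_nat_inj_p in \<open>auto simp: inj_on_def\<close>)

lemma of_nat_mod_p: "(of_nat (k mod p) :: 'a) = of_nat k"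
proof -
  have "(of_nat k :: 'a) = of_nat (k mod p + p * (k div p))" by simp
  also have "\<dots> = of_nat (k mod p)"
  proof -
    have "(of_nat p :: 'a) = 0" using of_nat_CHAR[where 'a='a] char_p by simp
    then show ?thesis by (simp only: of_nat_add of_nat_mult) simp
  qed
  finally show ?thesis by simp
qed

definition ee :: "'a \<Rightarrow> complex" where "ee z = zeta_pow p (prime_field_nat p z)"

lemma zeta_pow_eq: "zeta_pow p k = exp (2 * pi * \<i> / of_nat p) ^ k"
  unfolding zeta_pow_def by (simp add: exp_of_nat_mult[symmetric] mult.commute mult.left_commute)

lemma zeta_pow_p: "exp (2 * pi * \<i> / of_nat p) ^ p = 1"
proof -
  have "exp (2 * pi * \<i> / of_nat p) ^ p = exp (of_nat p * (2 * pi * \<i> / of_nat p))"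
    by (rule exp_of_nat_mult[symmetric])
  also have "of_nat p * (2 * pi * \<i> / of_nat p) = 2 * pi * \<i>" using p_gt1 by simp
  also have "exp (2 * pi * \<i>) = 1" by simp
  finally show ?thesis .
qed

lemma zeta_pow_mod: "zeta_pow p (k mod p) = zeta_pow p k"
proof -
  have "zeta_pow p k = exp (2 * pi * \<i> / of_nat p) ^ (k mod p + p * (k div p))" by (simp add: zeta_pow_eq)
  also have "\<dots> = zeta_pow p (k mod p)"
    by (simp only: zeta_pow_eq power_add power_mult zeta_pow_p power_one mult_1_right)
  finally show ?thesis by simp
qed

lemma ee_of_nat: "ee (of_nat k) = zeta_pow p k"
proof -
  have "ee (of_nat k) = ee (of_nat (k mod p))" by (simp add: of_nat_mod_p)
  also have "\<dots> = zeta_pow p (k mod p)" unfolding ee_def using p_gt1 by (simp add: pfn_of_nat)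
  finally show ?thesis by (simp add: zeta_pow_mod)
qed

lemma ee_add: assumes "a \<in> sub p" "b \<in> sub p" shows "ee (a + b) = ee a * ee b"
proof -
  obtain i j where "a = of_nat i" "b = of_nat j" using assms sub_p by auto
  then show ?thesis by (simp add: ee_of_nat zeta_pow_eq power_add flip: of_nat_add)
qed

lemma ee_0: "ee 0 = 1"
  using ee_of_nat[of 0] by (simp add: zeta_pow_def)

lemma norm_ee: assumes "a \<in> sub p" shows "norm (ee a) = 1"
proof -
  obtain i where "a = of_nat i" using assms sub_p by auto
  then show ?thesis by (simp add: ee_of_nat zeta_pow_eq norm_power)
qed

lemma ee_neg: assumes "a \<in> sub p" shows "ee (- a) * ee a = 1"
proof -
  have "- a \<in> sub (p ^ 1)" using assms sub_neg[of a 1] by simp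
  then have "ee (- a + a) = ee (- a) * ee a" using ee_add[of "- a" a] assms by simp
  then show ?thesis using ee_0 by simp
qed

lemma cnj_ee: assumes "a \<in> sub p" shows "cnj (ee a) = ee (- a)"
proof -
  have "ee a * cnj (ee a) = 1" using norm_ee[OF assms]
    by (metis complex_norm_square of_real_1 power_one)
  then show ?thesis using ee_neg[OF assms]
    by (metis mult.commute mult_cancel_left mult_zero_left zero_neq_one)
qed

lemma ee_ne1: assumes "a \<in> sub p" "a \<noteq> 0" shows "ee a \<noteq> 1"
proof -
  obtain i where i: "a = of_nat i" "i < p" using assms sub_p by auto
  have "i \<noteq> 0" proof assume "i = 0" then show False using i assms by simp qed
  show ?thesis
  proof
    assume "ee a = 1"
    then have "exp (2 * pi * \<i> * of_nat i / of_nat p) = 1" using i by (simp add: ee_of_nat zeta_pow_def)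
    then obtain m :: int where "2 * pi * \<i> * of_nat i / of_nat p = 2 * pi * of_int m * \<i>"
      using exp_eq_1[of "2 * pi * \<i> * of_nat i / of_nat p"] by (auto simp: complex_eq_iff)
    then have "(2 * pi * \<i>) * (of_nat i / of_nat p) = (2 * pi * \<i>) * (of_int m :: complex)"
      by (simp add: field_simps)
    moreover have "(2 * pi * \<i>) \<noteq> (0::complex)" by simp
    ultimately have "of_nat i / of_nat p = (of_int m :: complex)"
      by (metis mult_left_cancel)
    then have "real i / real p = real_of_int m"
      by (metis of_real_divide of_real_eq_iff of_real_of_int_eq of_real_of_nat_eq)
    then have "real i = real_of_int m * real p" using p_gt1 by (simp add: field_simps)
    then have "int i = m * int p" by (metis of_int_eq_iff of_int_mult of_int_of_nat_eq)
    then have "int p dvd int i" by simp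
    then show False using i \<open>i \<noteq> 0\<close> by (auto dest: dvd_imp_le simp: int_dvd_int_iff)
  qed
qed

end

context ffield
begin

lemma tr_add: "rel_trace (p ^ k) j ((x::'a) + y) = rel_trace (p ^ k) j x + rel_trace (p ^ k) j y"
  unfolding rel_trace_def by (simp add: frob_add power_mult[symmetric] sum.distrib)

lemma tr_neg: "rel_trace (p ^ k) j (- (x::'a)) = - rel_trace (p ^ k) j x"
  unfolding rel_trace_def by (simp add: frob_neg power_mult[symmetric] sum_negf)

lemma tr_diff: "rel_trace (p ^ k) j ((x::'a) - y) = rel_trace (p ^ k) j x - rel_trace (p ^ k) j y"
  using tr_add[of k j x "- y"] tr_neg[of k j y] by simp

lemma tr_0: "rel_trace (p ^ k) j (0::'a) = 0"
  unfolding rel_trace_def using p_gt1 by (simp add: power_0_left)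

lemma tr_scal: "c \<in> sub m \<Longrightarrow> rel_trace m j ((c::'a) * y) = c * rel_trace m j y"
  unfolding rel_trace_def sub_def by (simp add: power_mult_distrib pow_iter sum_distrib_left)

lemma tr_in:
  assumes "(y::'a) \<in> sub ((p ^ k) ^ j)"
  shows "rel_trace (p ^ k) j y \<in> sub (p ^ k)"
proof -
  define m where "m = p ^ k"
  have yj: "y ^ (m ^ j) = y" using assms unfolding sub_def m_def by simp
  have "(rel_trace m j y) ^ m = (\<Sum>i<j. y ^ (m ^ Suc i))"
    unfolding rel_trace_def m_def by (simp add: frob_sum power_mult[symmetric] mult.commute)
  also have "\<dots> + y ^ (m ^ 0) = (\<Sum>i<Suc j. y ^ (m ^ i))"
    by (subst sum.lessThan_Suc_shift) simp
  also have "\<dots> = rel_trace m j y + y ^ (m ^ j)" by (simp add: rel_trace_def)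
  finally show ?thesis using yj unfolding sub_def m_def by simp
qed

lemma tr_trans: "rel_trace p a (rel_trace (p ^ a) b (y::'a)) = rel_trace p (a * b) y"
proof -
  have "rel_trace p a (rel_trace (p ^ a) b y) = (\<Sum>i<a. \<Sum>j<b. y ^ (p ^ (a * j + i)))"
    unfolding rel_trace_def
    by (simp add: frob_sum power_mult[symmetric] power_add mult.commute)
  also have "\<dots> = (\<Sum>j<b. \<Sum>i<a. y ^ (p ^ (a * j + i)))" by (rule sum.swap)
  also have "\<dots> = (\<Sum>j<b. \<Sum>k\<in>{j * a..<j * a + a}. y ^ (p ^ k))"
  proof (rule sum.cong[OF refl])
    fix j
    have "(\<Sum>k\<in>{j * a..<j * a + a}. y ^ (p ^ k)) = (\<Sum>i\<in>{0..<a}. y ^ (p ^ (i + j * a)))"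
      using sum.shift_bounds_nat_ivl[of "\<lambda>k. y ^ (p ^ k)" 0 "j * a" a] by (simp add: add.commute)
    then show "(\<Sum>i<a. y ^ (p ^ (a * j + i))) = (\<Sum>k\<in>{j * a..<j * a + a}. y ^ (p ^ k))"
      by (simp add: atLeast0LessThan mult.commute add.commute)
  qed
  also have "\<dots> = (\<Sum>k<b * a. y ^ (p ^ k))" by (rule sum.nat_group)
  finally show ?thesis by (simp add: rel_trace_def mult.commute)
qed

lemma tr_p_0: "rel_trace p K (0::'a) = 0" using tr_0[of 1 K] by simp

lemma tr_p_in: "rel_trace p K (y::'a) \<in> sub p" if "y \<in> sub (p ^ K)"
  using tr_in[of y 1 K] that by simp

lemma charsum:
  assumes "K > 0" "K dvd n"
  shows "(\<Sum>y\<in>sub (p ^ K). ee (rel_trace p K (y::'a))) = 0"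
proof -
  let ?S = "sub (p ^ K) :: 'a set"
  have "card {y::'a. (\<Sum>i<K. y ^ (p ^ i)) = 0} \<le> p ^ (K - 1)"
    by (rule roots_trace_bound) (use p_gt1 assms in auto)
  moreover have "p ^ (K - 1) < p ^ K" using p_gt1 assms(1) by (simp add: power_strict_increasing)
  moreover have "card ?S = p ^ K" by (rule card_sub) fact+
  ultimately have "\<not> ?S \<subseteq> {y::'a. (\<Sum>i<K. y ^ (p ^ i)) = 0}"
    by (metis card_mono finite leD order.strict_trans1 finite_code)
  then obtain y0 where y0: "y0 \<in> ?S" "rel_trace p K y0 \<noteq> 0" unfolding rel_trace_def by auto
  have "(\<Sum>y\<in>?S. ee (rel_trace p K y)) = (\<Sum>y\<in>?S. ee (rel_trace p K (y + y0)))"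
    by (rule sum.reindex_bij_witness[of _ "\<lambda>y. y + y0" "\<lambda>y. y - y0"])
       (use y0 sub_add sub_diff in auto)
  also have "\<dots> = (\<Sum>y\<in>?S. ee (rel_trace p K y) * ee (rel_trace p K y0))"
    using tr_add[of 1 K] y0 by (intro sum.cong refl) (simp add: ee_add tr_p_in)
  also have "\<dots> = (\<Sum>y\<in>?S. ee (rel_trace p K y)) * ee (rel_trace p K y0)"
    by (simp add: sum_distrib_right)
  finally have "(\<Sum>y\<in>?S. ee (rel_trace p K y)) * (1 - ee (rel_trace p K y0)) = 0"
    by (simp add: algebra_simps)
  moreover have "ee (rel_trace p K y0) \<noteq> 1" using ee_ne1 tr_p_in y0 by simp
  ultimately show ?thesis by simp
qed

lemma charsum_mult:
  assumes "K > 0" "K dvd n" "c \<in> sub (p ^ K)" "c \<noteq> 0"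
  shows "(\<Sum>y\<in>sub (p ^ K). ee (rel_trace p K ((c::'a) * y))) = 0"
proof -
  have "(\<Sum>y\<in>sub (p ^ K). ee (rel_trace p K (c * y))) = (\<Sum>y\<in>sub (p ^ K). ee (rel_trace p K (y::'a)))"
    by (rule sum.reindex_bij_witness[of _ "\<lambda>y. y / c" "\<lambda>y. c * y"])
       (use assms sub_mult sub_divide in auto)
  then show ?thesis using charsum[OF assms(1,2)] by simp
qed

lemma charsum_nz:
  assumes "K > 0" "K dvd n" "c \<in> sub (p ^ K)"
  shows "(\<Sum>y\<in>sub (p ^ K) - {0}. ee (rel_trace p K ((c::'a) * y))) =
           (if c = 0 then of_nat (p ^ K) - 1 else -1)"
proof -
  have "(\<Sum>y\<in>sub (p ^ K). ee (rel_trace p K ((c::'a) * y))) =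
        ee (rel_trace p K (c * 0)) + (\<Sum>y\<in>sub (p ^ K) - {0}. ee (rel_trace p K ((c::'a) * y)))"
    using sub_0[of K] by (simp add: sum.remove[of _ 0])
  moreover have "ee (rel_trace p K (c * 0)) = 1" by (simp add: tr_p_0 ee_0)
  moreover have "(\<Sum>y\<in>sub (p ^ K). ee (rel_trace p K ((c::'a) * y))) =
        (if c = 0 then of_nat (p ^ K) else 0)"
    using charsum_mult[OF assms] card_sub[OF assms(1,2)] by (simp add: tr_p_0 ee_0)
  ultimately show ?thesis by (auto simp: algebra_simps eq_neg_iff_add_eq_0 add.commute)
qed

end

locale ffq = ffield +
  fixes t s r q :: nat
  assumes t_pos: "t > 0" and s_pos: "s > 0" and r_def: "r = p ^ t" and q_def: "q = r ^ s"
    and n_def: "n = 2 * t * s"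
begin

lemma q_pt: "q = p ^ (t * s)" by (simp add: q_def r_def power_mult)
lemma qq: "q ^ 2 = p ^ n"
proof -
  have "q ^ 2 = p ^ (t * s * 2)" by (simp add: q_pt power_mult)
  also have "t * s * 2 = n" by (simp add: n_def)
  finally show ?thesis .
qed
lemma r_gt1: "r > 1" using p_gt1 t_pos r_def by (metis one_less_power)
lemma q_gt1: "q > 1" using r_gt1 s_pos q_def by (metis one_less_power)
lemma r_odd: "odd r" using odd_p r_def by simp

lemma card_R: "card (sub r :: 'a set) = r"
  using card_sub[of t] t_pos r_def n_def by simp
lemma card_Fq: "card (sub q :: 'a set) = q"
  using card_sub[of "t * s"] t_pos s_pos q_pt n_def by simp

lemma R_Fq: "(x::'a) \<in> sub r \<Longrightarrow> x \<in> sub q"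
  using sub_mono[of x r s] q_def by simp

lemma fermat_q: "(x::'a) ^ (q ^ 2) = x" using fermat qq by simp
lemma fermat_q': "(x::'a) ^ (q * q) = x" using fermat_q by (simp add: power2_eq_square)

definition N :: "'a \<Rightarrow> 'a" where "N x = x ^ (q + 1)"
definition T :: "'a \<Rightarrow> 'a" where "T y = rel_trace r s y"
definition chi :: "'a \<Rightarrow> complex" where "chi w = ee (rel_trace p t w)"
definition psi :: "'a \<Rightarrow> complex" where "psi z = ee (rel_trace p n z)"

lemma N_in: "N x \<in> sub q"
proof -
  have "(x ^ (q + 1)) ^ q = x ^ (q * q) * x ^ q" by (simp add: power_mult[symmetric] algebra_simps power_add)
  also have "\<dots> = x ^ (q + 1)" using fermat_q' by (simp add: power_add mult.commute)
  finally show ?thesis by (simp add: N_def sub_def)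
qed

lemma N_mult: "N (x * y) = N x * N y" by (simp add: N_def power_mult_distrib)

lemma T_in: "y \<in> sub q \<Longrightarrow> T y \<in> sub r"
  unfolding T_def using tr_in[of y t s] by (simp add: r_def q_def)

lemma T_add: "T (x + y) = T x + T y" unfolding T_def using tr_add[of t] by (simp add: r_def)
lemma T_neg: "T (- x) = - T x" unfolding T_def using tr_neg[of t] by (simp add: r_def)
lemma T_diff: "T (x - y) = T x - T y" unfolding T_def using tr_diff[of t] by (simp add: r_def)
lemma T_scal: "c \<in> sub r \<Longrightarrow> T (c * y) = c * T y" unfolding T_def by (rule tr_scal)
lemma T_0: "T 0 = 0" unfolding T_def using tr_0[of t] by (simp add: r_def)

lemma chi_T: "chi (T y) = ee (rel_trace p (t * s) y)"
  unfolding chi_def T_def using tr_trans[of t s y] by (simp add: r_def)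

lemma psi_eq: "psi z = chi (T (z + z ^ q))"
proof -
  have "n = t * s * 2" by (simp add: n_def)
  then have "rel_trace p n z = rel_trace p (t * s * 2) z" by simp
  also have "\<dots> = rel_trace p (t * s) (rel_trace (p ^ (t * s)) 2 z)" by (simp add: tr_trans)
  also have "rel_trace (p ^ (t * s)) 2 z = z + z ^ q"
    by (simp add: rel_trace_def q_pt numeral_2_eq_2)
  finally show ?thesis by (simp add: psi_def chi_T)
qed

lemma chi_add: "a \<in> sub r \<Longrightarrow> b \<in> sub r \<Longrightarrow> chi (a + b) = chi a * chi b"
  unfolding chi_def r_def
  by (simp add: tr_add[of 1 t, simplified] ee_add tr_p_in)

lemma chi_0: "chi 0 = 1" unfolding chi_def by (simp add: tr_p_0 ee_0)

lemma chi_neg: "a \<in> sub r \<Longrightarrow> cnj (chi a) = chi (- a)"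
  unfolding chi_def r_def
  by (simp add: tr_neg[of 1 t, simplified] cnj_ee tr_p_in)

lemma norm_chi: "a \<in> sub r \<Longrightarrow> norm (chi a) = 1"
  unfolding chi_def r_def by (simp add: norm_ee tr_p_in)

lemma psi_add: "psi (a + b) = psi a * psi b"
proof -
  have "a \<in> sub (p ^ n)" "b \<in> sub (p ^ n)" using sub_UNIV by auto
  then show ?thesis unfolding psi_def by (simp add: tr_add[of 1 n, simplified] ee_add tr_p_in)
qed

lemma psi_neg: "cnj (psi a) = psi (- a)"
proof -
  have "a \<in> sub (p ^ n)" using sub_UNIV by auto
  then show ?thesis unfolding psi_def by (simp add: tr_neg[of 1 n, simplified] cnj_ee tr_p_in)
qed

lemma charsum_R_nz:
  assumes "c \<in> sub r"
  shows "(\<Sum>y\<in>sub r - {0}. chi (c * y)) = (if c = 0 then of_nat r - 1 else -1)"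
  using charsum_nz[of t c] assms t_pos n_def unfolding chi_def r_def by simp

lemma charsum_R:
  assumes "c \<in> sub r"
  shows "(\<Sum>y\<in>sub r. chi (c * y)) = (if c = 0 then of_nat r else 0)"
proof -
  have "(\<Sum>y\<in>sub r. chi (c * y)) = chi (c * 0) + (\<Sum>y\<in>sub r - {0}. chi (c * y))"
    using sub_0[of t] r_def by (simp add: sum.remove[of _ 0])
  then show ?thesis using charsum_R_nz[OF assms] chi_0 by simp
qed

lemma charsum_all:
  assumes "b \<noteq> 0"
  shows "(\<Sum>x\<in>UNIV. psi (b * x)) = 0"
  using charsum_mult[of n b] assms n_pos sub_UNIV unfolding psi_def by simp

lemma charsum_Fq_nz:
  assumes "c \<in> sub q" "c \<noteq> 0"
  shows "(\<Sum>y\<in>sub q - {0}. chi (T (c * y))) = -1"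
  using charsum_nz[of "t * s" c] assms t_pos s_pos n_def unfolding chi_T q_pt by simp

end

context ffq
begin

lemma frob_q: "((x::'a) + y) ^ q = x ^ q + y ^ q"
  using frob_add[of x y "t * s"] q_pt by simp

lemma norm_fibres:
  shows "N ` (UNIV - {0}) = sub q - {0}"
    and "\<And>y. y \<in> sub q - {0} \<Longrightarrow> card {x\<in>UNIV - {0}. N x = y} = q + 1"
proof -
  define Z where "Z = {x::'a. x ^ (q + 1) = 1}"
  define U :: "'a set" where "U = UNIV - {0}"
  have cZ: "card Z \<le> q + 1" unfolding Z_def by (rule roots_unity_bound) simp
  have img: "N ` U \<subseteq> sub q - {0}" using N_in by (auto simp: U_def N_def)
  have fib: "card {x\<in>U. N x = y} = card Z" if "y \<in> N ` U" for y
  proof -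
    from that obtain x0 where x0: "x0 \<in> U" "y = N x0" by auto
    have "{x\<in>U. N x = y} = (\<lambda>z. x0 * z) ` Z"
    proof (intro equalityI subsetI)
      fix x assume x: "x \<in> {x\<in>U. N x = y}"
      have "N (x / x0) = N x / N x0" by (simp add: N_def power_divide)
      also have "\<dots> = 1" using x x0 by (simp add: U_def N_def)
      finally have "x / x0 \<in> Z" by (simp add: Z_def N_def)
      then show "x \<in> (\<lambda>z. x0 * z) ` Z" using x0 by (intro image_eqI[of _ _ "x / x0"]) (auto simp: U_def)
    next
      fix x assume "x \<in> (\<lambda>z. x0 * z) ` Z"
      then obtain z where z: "z \<in> Z" "x = x0 * z" by auto
      then have "z \<noteq> 0" using q_gt1 by (auto simp: Z_def)
      then show "x \<in> {x\<in>U. N x = y}" using z x0 by (auto simp: U_def Z_def N_def power_mult_distrib)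
    qed
    moreover have "inj_on (\<lambda>z. x0 * z) Z" using x0 by (auto simp: inj_on_def U_def)
    ultimately show ?thesis by (simp add: card_image)
  qed
  have cU: "card U = card (N ` U) * card Z" by (rule card_by_fibres) (use fib in auto)
  have "card U = q ^ 2 - 1" unfolding U_def using card_a qq by (simp add: card_Diff_singleton)
  then have eq: "card (N ` U) * card Z = (q - 1) * (q + 1)" using cU
    by (simp add: power2_eq_square algebra_simps)
  have cS: "card (sub q - {0} :: 'a set) = q - 1" using card_Fq sub_0[of "t * s"] q_pt
    by (simp add: card_Diff_singleton)
  have cNU: "card (N ` U) \<le> q - 1" using card_mono[OF _ img] cS by simp
  have q1: "q - 1 > 0" using q_gt1 by simp
  have Z0: "card Z > 0" unfolding Z_def by (subst card_gt_0_iff) (auto intro: exI[of _ 1])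
  have "card (N ` U) = q - 1 \<and> card Z = q + 1"
  proof (rule ccontr)
    assume "\<not> ?thesis"
    then have "card (N ` U) < q - 1 \<or> card Z < q + 1" using cNU cZ by linarith
    then have "card (N ` U) * card Z < (q - 1) * (q + 1)"
    proof
      assume "card (N ` U) < q - 1"
      then show ?thesis using cZ Z0 by (intro mult_less_le_imp_less) auto
    next
      assume "card Z < q + 1"
      then have "(q - 1) * card Z < (q - 1) * (q + 1)" using q1 by (metis mult_less_cancel1)
      moreover have "card (N ` U) * card Z \<le> (q - 1) * card Z" using cNU by (rule mult_le_mono1)
      ultimately show ?thesis by linarith
    qed
    then show False using eq by simp
  qed
  then have "N ` U = sub q - {0}" using card_subset_eq[OF _ img] cS by simp
  then show "N ` (UNIV - {0}) = sub q - {0}" by (simp add: U_def)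
  show "card {x\<in>UNIV - {0}. N x = y} = q + 1" if "y \<in> sub q - {0}" for y
    using fib[of y] that \<open>N ` U = sub q - {0}\<close> \<open>card (N ` U) = q - 1 \<and> card Z = q + 1\<close>
    by (simp add: U_def)
qed

lemma N_0: "N 0 = 0" by (simp add: N_def)

lemma gauss_N:
  assumes "c \<in> sub q" "c \<noteq> 0"
  shows "(\<Sum>x\<in>UNIV. chi (T (c * N x))) = - of_nat q"
proof -
  have "(\<Sum>x\<in>UNIV. chi (T (c * N x))) = chi (T (c * N 0)) + (\<Sum>x\<in>UNIV - {0}. chi (T (c * N x)))"
    by (simp add: sum.remove[of _ 0])
  also have "chi (T (c * N 0)) = 1" by (simp add: N_0 T_0 chi_0)
  also have "(\<Sum>x\<in>UNIV - {0}. chi (T (c * N x))) =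
      (\<Sum>y\<in>N ` (UNIV - {0}). of_nat (card {x\<in>UNIV - {0}. N x = y}) * chi (T (c * y)))"
    by (rule sum_by_fibres) simp
  also have "\<dots> = (\<Sum>y\<in>sub q - {0}. of_nat (q + 1) * chi (T (c * y)))"
    using norm_fibres by (intro sum.cong) auto
  also have "\<dots> = of_nat (q + 1) * (\<Sum>y\<in>sub q - {0}. chi (T (c * y)))" by (simp only: sum_distrib_left)
  also have "\<dots> = of_nat (q + 1) * (-1)" using charsum_Fq_nz[OF assms] by simp
  finally show ?thesis by simp
qed

lemma square_identity:
  assumes "c \<in> sub q" "c \<noteq> 0"
  shows "b * x + (b * x) ^ q + c * N x = c * N (x + b ^ q / c) - N b / c"
proof -
  have cq: "c ^ q = c" using assms by (simp add: sub_def)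
  have bq: "(b ^ q / c) ^ q = b / c" using fermat_q' cq by (simp add: power_divide power_mult[symmetric])
  have "N (x + b ^ q / c) = (x ^ q + b / c) * (x + b ^ q / c)"
    by (simp add: N_def frob_q bq)
  then have "c * N (x + b ^ q / c) - N b / c = c * x ^ q * x + x ^ q * b ^ q + b * x + b ^ q * b / c - b ^ q * b / c"
    using assms by (simp add: N_def field_simps)
  then show ?thesis by (simp add: N_def power_mult_distrib algebra_simps)
qed

lemma Tq_in: "(z::'a) + z ^ q \<in> sub q"
proof -
  have "(z + z ^ q) ^ q = z ^ q + (z ^ q) ^ q" by (rule frob_q)
  also have "(z ^ q) ^ q = z" using fermat_q' by (simp add: power_mult[symmetric])
  finally show ?thesis by (simp add: sub_def add.commute)
qed

lemma E_formula:
  assumes "b \<noteq> 0" "c \<in> sub r" "c \<noteq> 0"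
  shows "(\<Sum>x\<in>UNIV. psi (b * x) * chi (c * T (N x))) = - of_nat q * chi (- T (N b) / c)"
proof -
  have cq: "c \<in> sub q" using assms R_Fq by simp
  have ic: "inverse c \<in> sub r" using assms sub_inverse by simp
  let ?beta = "b ^ q / c"
  have step: "psi (b * x) * chi (c * T (N x)) = chi (T (c * N (x + ?beta))) * chi (- T (N b) / c)" for x
  proof -
    have i1: "T (b * x + (b * x) ^ q) \<in> sub r" by (rule T_in[OF Tq_in])
    have i2: "T (c * N x) \<in> sub r" by (rule T_in[OF sub_mult[OF cq N_in]])
    have i3: "T (c * N (x + ?beta)) \<in> sub r" by (rule T_in[OF sub_mult[OF cq N_in]])
    have "N b / c \<in> sub (p ^ (t * s))" using sub_divide[OF N_in cq] q_pt by simp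
    then have "- (N b / c) \<in> sub q" using sub_neg q_pt by simp
    then have i4: "T (- (N b / c)) \<in> sub r" by (rule T_in)
    have "psi (b * x) * chi (c * T (N x)) = chi (T (b * x + (b * x) ^ q)) * chi (T (c * N x))"
      using assms by (simp add: psi_eq T_scal)
    also have "\<dots> = chi (T (b * x + (b * x) ^ q) + T (c * N x))" using chi_add[OF i1 i2] by simp
    also have "\<dots> = chi (T (c * N (x + ?beta) - N b / c))"
      using square_identity[OF cq assms(3), of b x] by (simp add: T_add[symmetric])
    also have "\<dots> = chi (T (c * N (x + ?beta)) + T (- (N b / c)))" by (simp add: T_add[symmetric])
    also have "\<dots> = chi (T (c * N (x + ?beta))) * chi (T (- (N b / c)))" using chi_add[OF i3 i4] by simp
    also have "T (- (N b / c)) = - T (N b) / c"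
      using T_scal[OF ic, of "N b"] by (simp add: T_neg divide_inverse mult.commute)
    finally show ?thesis .
  qed
  have "(\<Sum>x\<in>UNIV. psi (b * x) * chi (c * T (N x))) =
        (\<Sum>x\<in>UNIV. chi (T (c * N (x + ?beta)))) * chi (- T (N b) / c)"
    by (simp add: step sum_distrib_right)
  also have "(\<Sum>x\<in>UNIV. chi (T (c * N (x + ?beta)))) = (\<Sum>x\<in>UNIV. chi (T (c * N x)))"
    by (rule sum.reindex_bij_witness[of _ "\<lambda>x. x - ?beta" "\<lambda>x. x + ?beta"]) auto
  also have "\<dots> = - of_nat q" by (rule gauss_N[OF cq assms(3)])
  finally show ?thesis by simp
qed

end

context ffq
begin

lemma sub_r_0: "(0::'a) \<in> sub r" using sub_0[of t] r_def by simp
lemma sub_r_neg: "(a::'a) \<in> sub r \<Longrightarrow> - a \<in> sub r" using sub_neg[of a t] r_def by simp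
lemma sub_r_add: "(a::'a) \<in> sub r \<Longrightarrow> b \<in> sub r \<Longrightarrow> a + b \<in> sub r" using sub_add[of a t b] r_def by simp
lemma sub_r_diff: "(a::'a) \<in> sub r \<Longrightarrow> b \<in> sub r \<Longrightarrow> a - b \<in> sub r" using sub_diff[of a t b] r_def by simp

definition Rs :: "'a set" where "Rs = sub r - {0}"
definition Qs :: "'a set" where "Qs = {v \<in> Rs. \<exists>z. z ^ r = z \<and> z ^ 2 = v}"
definition NS :: "'a set" where "NS = Rs - Qs"

lemma two_ne0: "(2::'a) \<noteq> 0"
proof
  assume "(2::'a) = 0"
  then have "(of_nat 2 :: 'a) = 0" by simp
  then have "p dvd 2" using of_nat_eq_0_iff_char_dvd[where 'a='a] char_p by metis
  then show False using p_ge3 by (auto dest: dvd_imp_le)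
qed

lemma fin_Rs: "finite Rs" and fin_Qs: "finite Qs" and fin_NS: "finite NS" by (simp_all add: Rs_def Qs_def NS_def)

lemma card_Rs: "card Rs = r - 1"
  using card_R sub_r_0 by (simp add: Rs_def card_Diff_singleton)

lemma Qs_Rs: "Qs \<subseteq> Rs" by (auto simp: Qs_def)

lemma card_Qs: "card Qs * 2 = r - 1"
proof -
  define sq where "sq = (\<lambda>z::'a. z ^ 2)"
  have img: "sq ` Rs = Qs"
  proof (intro equalityI subsetI)
    fix v assume "v \<in> sq ` Rs"
    then obtain z where z: "z \<in> Rs" "v = z ^ 2" by (auto simp: sq_def)
    then have "v \<in> Rs" using sub_power[of z r 2] by (auto simp: Rs_def)
    then show "v \<in> Qs" using z by (auto simp: Qs_def Rs_def sub_def)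
  next
    fix v assume "v \<in> Qs"
    then obtain z where z: "z ^ r = z" "z ^ 2 = v" "v \<in> Rs" by (auto simp: Qs_def)
    then have "z \<in> Rs" by (auto simp: Rs_def sub_def)
    then show "v \<in> sq ` Rs" using z by (auto simp: sq_def)
  qed
  have fib: "card {z\<in>Rs. sq z = v} = 2" if "v \<in> sq ` Rs" for v
  proof -
    from that obtain z0 where z0: "z0 \<in> Rs" "v = z0 ^ 2" by (auto simp: sq_def)
    have "{z\<in>Rs. sq z = v} = {z0, - z0}"
      using z0 sub_r_neg[of z0] by (auto simp: sq_def power2_eq_iff Rs_def)
    moreover have "z0 \<noteq> - z0"
    proof
      assume "z0 = - z0"
      then have "2 * z0 = 0" by simp
      then show False using two_ne0 z0 by (simp add: Rs_def)
    qed
    ultimately show ?thesis by simp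
  qed
  have "card Rs = card (sq ` Rs) * 2" by (rule card_by_fibres[OF fin_Rs fib])
  then show ?thesis using img card_Rs by simp
qed

lemma card_NS: "card NS = card Qs"
  using card_Qs card_Rs Qs_Rs by (simp add: NS_def card_Diff_subset fin_Qs)

lemma Qs_iff: "v \<in> Qs \<longleftrightarrow> v \<in> Rs \<and> (\<exists>z\<in>sub r. z ^ 2 = v)"
  by (auto simp: Qs_def sub_def)

lemma Q_mult: "a \<in> Qs \<Longrightarrow> b \<in> Qs \<Longrightarrow> a * b \<in> Qs"
  unfolding Qs_iff Rs_def by (auto intro!: bexI[of _ "_ * _"] sub_mult simp: power_mult_distrib)

lemma QN_mult: assumes "a \<in> Qs" "b \<in> NS" shows "a * b \<in> NS"
proof -
  have ab: "a * b \<in> Rs" using assms sub_mult by (auto simp: NS_def Qs_def Rs_def)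
  show ?thesis
  proof (rule ccontr)
    assume "a * b \<notin> NS"
    then have "a * b \<in> Qs" using ab by (simp add: NS_def)
    then obtain w where w: "w \<in> sub r" "w ^ 2 = a * b" by (auto simp: Qs_iff)
    obtain z where z: "z \<in> sub r" "z ^ 2 = a" using assms by (auto simp: Qs_iff)
    have a0: "a \<noteq> 0" using assms by (auto simp: Qs_def Rs_def)
    have "(w / z) ^ 2 = b" using w z a0 by (simp add: power_divide)
    moreover have "w / z \<in> sub r" using w z sub_divide by simp
    ultimately have "b \<in> Qs" using assms by (auto simp: Qs_iff NS_def)
    then show False using assms by (simp add: NS_def)
  qed
qed

lemma NN_mult: assumes "a \<in> NS" "b \<in> NS" shows "a * b \<in> Qs"
proof -
  have a: "a \<in> Rs" "a \<noteq> 0" using assms by (auto simp: NS_def Rs_def)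
  have "(\<lambda>v. a * v) ` Qs \<subseteq> NS" using QN_mult assms by (auto simp: mult.commute)
  moreover have "inj_on (\<lambda>v. a * v) Qs" using a by (auto simp: inj_on_def)
  then have "card ((\<lambda>v. a * v) ` Qs) = card NS" using card_NS by (simp add: card_image)
  ultimately have img: "(\<lambda>v. a * v) ` Qs = NS" using card_subset_eq fin_NS by blast
  have ab: "a * b \<in> Rs" using assms sub_mult by (auto simp: NS_def Rs_def)
  show ?thesis
  proof (rule ccontr)
    assume "a * b \<notin> Qs"
    then have "a * b \<in> NS" using ab by (simp add: NS_def)
    then have "a * b \<in> (\<lambda>v. a * v) ` Qs" using img by simp
    then obtain v where "v \<in> Qs" "a * b = a * v" by blast
    then have "b \<in> Qs" using a by simp
    then show False using assms by (simp add: NS_def)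
  qed
qed

lemma quad_Qs: "v \<in> Qs \<Longrightarrow> quad_char r v = 1"
  by (auto simp: quad_char_def Qs_def Rs_def)

lemma quad_NS: "v \<in> NS \<Longrightarrow> quad_char r v = -1"
  by (auto simp: quad_char_def Qs_def Rs_def NS_def)

lemma quad_Rs: "v \<in> Rs \<Longrightarrow> quad_char r v = (if v \<in> Qs then 1 else -1)"
  using quad_Qs quad_NS by (auto simp: NS_def)

lemma quad_mult: assumes "a \<in> Rs" "b \<in> Rs" shows "quad_char r (a * b) = quad_char r a * quad_char r b"
proof -
  have cases: "a \<in> Qs \<or> a \<in> NS" "b \<in> Qs \<or> b \<in> NS" using assms by (auto simp: NS_def)
  then show ?thesis
    using Q_mult QN_mult[of a b] QN_mult[of b a] NN_mult[of a b] quad_Qs quad_NS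
    by (auto simp: mult.commute)
qed

lemma quad_sq: "a \<in> Rs \<Longrightarrow> quad_char r a * quad_char r a = 1"
  using quad_Rs by auto

lemma Rs_mult: "a \<in> Rs \<Longrightarrow> b \<in> Rs \<Longrightarrow> a * b \<in> Rs"
  by (auto simp: Rs_def sub_mult)
lemma Rs_inverse: "a \<in> Rs \<Longrightarrow> inverse a \<in> Rs"
  by (auto simp: Rs_def sub_inverse)
lemma Rs_divide: "a \<in> Rs \<Longrightarrow> b \<in> Rs \<Longrightarrow> a / b \<in> Rs"
  by (auto simp: Rs_def sub_divide)
lemma Rs_neg: "a \<in> Rs \<Longrightarrow> - a \<in> Rs"
  using sub_r_neg[of a] by (auto simp: Rs_def)
lemma one_Rs: "1 \<in> Rs" by (simp add: Rs_def sub_1)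

lemma quad_inverse: assumes "a \<in> Rs" shows "quad_char r (inverse a) = quad_char r a"
proof -
  have "quad_char r (a * inverse a) = quad_char r a * quad_char r (inverse a)"
    using quad_mult assms Rs_inverse by blast
  moreover have "a * inverse a = 1" using assms by (simp add: Rs_def)
  moreover have "quad_char r (1::'a) = 1" by (auto simp: quad_char_def intro: exI[of _ 1])
  ultimately have "quad_char r a * quad_char r (inverse a) = 1" by simp
  then show ?thesis using quad_Rs[OF assms] quad_Rs[OF Rs_inverse[OF assms]] by (auto split: if_splits)
qed

lemma quad_one: "quad_char r (1::'a) = 1" by (auto simp: quad_char_def intro: exI[of _ 1])

lemma quad_sum: "(\<Sum>v\<in>Rs. (of_int (quad_char r v) :: complex)) = 0"
proof -
  have "(\<Sum>v\<in>Rs. (of_int (quad_char r v) :: complex)) = (\<Sum>v\<in>Qs. 1) + (\<Sum>v\<in>NS. -1)"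
  proof -
    have "Rs = Qs \<union> NS" "Qs \<inter> NS = {}" using Qs_Rs by (auto simp: NS_def)
    then have "(\<Sum>v\<in>Rs. (of_int (quad_char r v) :: complex)) =
       (\<Sum>v\<in>Qs. (of_int (quad_char r v) :: complex)) + (\<Sum>v\<in>NS. (of_int (quad_char r v) :: complex))"
      using fin_Qs fin_NS by (simp add: sum.union_disjoint)
    then show ?thesis using quad_Qs quad_NS by simp
  qed
  then show ?thesis using card_NS by simp
qed

end

context ffq
begin

definition et :: "'a \<Rightarrow> complex" where "et v = of_int (quad_char r v)"
definition H :: complex where "H = (\<Sum>v\<in>Rs. et v * chi (- v))"

lemma et_mult: "a \<in> Rs \<Longrightarrow> b \<in> Rs \<Longrightarrow> et (a * b) = et a * et b"
  by (simp add: et_def quad_mult)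
lemma et_sq: "a \<in> Rs \<Longrightarrow> et a * et a = 1"
  unfolding et_def using quad_sq by (metis of_int_1 of_int_mult)
lemma et_inverse: "a \<in> Rs \<Longrightarrow> et (inverse a) = et a"
  by (simp add: et_def quad_inverse)
lemma et_divide: "a \<in> Rs \<Longrightarrow> b \<in> Rs \<Longrightarrow> et (a / b) = et a * et b"
  by (simp add: divide_inverse et_mult Rs_inverse et_inverse)
lemma norm_et: "a \<in> Rs \<Longrightarrow> norm (et a) = 1"
  using quad_Rs by (simp add: et_def)
lemma cnj_et: "cnj (et a) = et a" by (simp add: et_def)
lemma et_one: "et 1 = 1" by (simp add: et_def quad_one)
lemma et_sum: "(\<Sum>v\<in>Rs. et v) = 0" using quad_sum by (simp add: et_def)

lemma Rs_sub: "a \<in> Rs \<Longrightarrow> a \<in> sub r" by (simp add: Rs_def)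
lemma Rs_ne0: "a \<in> Rs \<Longrightarrow> a \<noteq> 0" by (simp add: Rs_def)

lemma H_c:
  assumes c: "c \<in> Rs"
  shows "(\<Sum>v\<in>Rs. et v * chi (- (c * v))) = et c * H"
proof -
  have "(\<Sum>v\<in>Rs. et v * chi (- (c * v))) = (\<Sum>w\<in>Rs. et c * (et w * chi (- w)))"
  proof (rule sum.reindex_bij_witness[of _ "\<lambda>w. w / c" "\<lambda>v. c * v"])
    fix v assume v: "v \<in> Rs"
    have "et c * et (c * v) = et c * et c * et v" using c v by (simp add: et_mult)
    then show "et c * (et (c * v) * chi (- (c * v))) = et v * chi (- (c * v))"
      using et_sq[OF c] by (simp add: mult.assoc[symmetric])
  qed (use c Rs_ne0 Rs_mult Rs_divide in auto)
  then show ?thesis by (simp add: H_def sum_distrib_left)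
qed

lemma chisum_Rs:
  assumes "w \<in> sub r"
  shows "(\<Sum>c\<in>Rs. chi (w * c)) = (if w = 0 then of_nat r - 1 else -1)"
  using charsum_R_nz[OF assms] by (simp add: Rs_def)

lemma H_sq: "H * cnj H = of_nat r"
proof -
  have cH: "cnj H = (\<Sum>b\<in>Rs. et b * chi b)"
    unfolding H_def by (simp add: cnj_et chi_neg Rs_sub sub_r_neg)
  have "H * cnj H = (\<Sum>a\<in>Rs. et a * chi (- a)) * (\<Sum>b\<in>Rs. et b * chi b)"
    unfolding cH unfolding H_def ..
  also have "\<dots> = (\<Sum>a\<in>Rs. \<Sum>b\<in>Rs. et a * chi (- a) * (et b * chi b))"
    by (rule sum_product)
  also have "\<dots> = (\<Sum>b\<in>Rs. \<Sum>a\<in>Rs. et a * chi (- a) * (et b * chi b))"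
    by (rule sum.swap)
  also have "\<dots> = (\<Sum>b\<in>Rs. \<Sum>t\<in>Rs. et t * chi ((1 - t) * b))"
  proof (rule sum.cong[OF refl])
    fix b assume b: "b \<in> Rs"
    show "(\<Sum>a\<in>Rs. et a * chi (- a) * (et b * chi b)) = (\<Sum>t\<in>Rs. et t * chi ((1 - t) * b))"
    proof (rule sum.reindex_bij_witness[of _ "\<lambda>t. t * b" "\<lambda>a. a / b"])
      fix a assume a: "a \<in> Rs"
      have "et (a / b) = et a * et b" using a b by (simp add: et_divide)
      moreover have "(1 - a / b) * b = - a + b" using b by (simp add: Rs_def field_simps)
      moreover have "chi (- a + b) = chi (- a) * chi b"
        using a b chi_add[of "- a" b] by (simp add: Rs_sub sub_r_neg del: uminus_add_conv_diff)
      ultimately show "et (a / b) * chi ((1 - a / b) * b) = et a * chi (- a) * (et b * chi b)"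
        using et_sq[OF b] by (simp add: algebra_simps)
    qed (use b Rs_ne0 Rs_mult Rs_divide in auto)
  qed
  also have "\<dots> = (\<Sum>t\<in>Rs. et t * (\<Sum>b\<in>Rs. chi ((1 - t) * b)))"
    by (subst sum.swap) (simp add: sum_distrib_left)
  also have "\<dots> = (\<Sum>t\<in>Rs. et t * (if t = 1 then of_nat r else 0) - et t)"
  proof (rule sum.cong[OF refl])
    fix t assume t: "t \<in> Rs"
    have "1 - t \<in> sub r" using t by (simp add: sub_r_diff sub_1 Rs_sub)
    then have "(\<Sum>b\<in>Rs. chi ((1 - t) * b)) = (if 1 - t = 0 then of_nat r - 1 else -1)"
      by (rule chisum_Rs)
    then show "et t * (\<Sum>b\<in>Rs. chi ((1 - t) * b)) = et t * (if t = 1 then of_nat r else 0) - et t"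
      by (simp add: algebra_simps)
  qed
  also have "\<dots> = (\<Sum>t\<in>Rs. et t * (if t = 1 then of_nat r else 0)) - (\<Sum>t\<in>Rs. et t)"
    by (simp add: sum_subtractf)
  also have "(\<Sum>t\<in>Rs. et t * (if t = 1 then of_nat r else 0)) = et 1 * of_nat r"
    using one_Rs fin_Rs by (simp add: if_distrib[of "\<lambda>x. et _ * x"] sum.delta' cong: if_cong)
  finally show ?thesis using et_sum et_one by simp
qed

lemma norm_H_sq: "norm H ^ 2 = real r"
proof -
  have "complex_of_real (norm H ^ 2) = H * cnj H" by (rule complex_norm_square)
  then have "complex_of_real (norm H ^ 2) = complex_of_real (real r)" using H_sq by simp
  then show ?thesis using of_real_eq_iff by blast
qed

end

context ffq
begin

lemma NS_sub: "v \<in> NS \<Longrightarrow> v \<in> sub r" by (simp add: NS_def Rs_def)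

lemma indicator_NS:
  assumes w: "w \<in> sub r"
  shows "(\<Sum>v\<in>NS. \<Sum>c\<in>sub r. chi (c * w) * chi (- (c * v))) = (if w \<in> NS then of_nat r else 0)"
proof -
  have "(\<Sum>v\<in>NS. \<Sum>c\<in>sub r. chi (c * w) * chi (- (c * v))) = (\<Sum>v\<in>NS. if w = v then of_nat r else 0)"
  proof (rule sum.cong[OF refl])
    fix v assume v: "v \<in> NS"
    have wv: "w - v \<in> sub r" using w v NS_sub sub_r_diff by simp
    have "(\<Sum>c\<in>sub r. chi (c * w) * chi (- (c * v))) = (\<Sum>c\<in>sub r. chi ((w - v) * c))"
    proof (rule sum.cong[OF refl])
      fix c :: 'a assume c: "c \<in> sub r"
      have "chi (c * w) * chi (- (c * v)) = chi (c * w + - (c * v))"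
        using c w v NS_sub chi_add[of "c * w" "- (c * v)"] by (simp add: sub_mult sub_r_neg del: uminus_add_conv_diff)
      also have "c * w + - (c * v) = (w - v) * c" by (simp add: algebra_simps)
      finally show "chi (c * w) * chi (- (c * v)) = chi ((w - v) * c)" .
    qed
    also have "\<dots> = (if w - v = 0 then of_nat r else 0)" by (rule charsum_R[OF wv])
    finally show "(\<Sum>c\<in>sub r. chi (c * w) * chi (- (c * v))) = (if w = v then of_nat r else 0)" by simp
  qed
  also have "\<dots> = (if w \<in> NS then of_nat r else 0)" using fin_NS by (simp add: sum.delta)
  finally show ?thesis .
qed

lemma G_formula:
  assumes c: "c \<in> Rs"
  shows "2 * (\<Sum>v\<in>NS. chi (- (c * v))) = -1 - et c * H"
proof -
  have dis: "Rs = Qs \<union> NS" "Qs \<inter> NS = {}" using Qs_Rs by (auto simp: NS_def)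
  have "- c \<in> sub r" "- c \<noteq> 0" using c by (auto simp: Rs_def sub_r_neg)
  then have "(\<Sum>v\<in>Rs. chi ((- c) * v)) = -1" using chisum_Rs[of "- c"] by simp
  then have s1: "(\<Sum>v\<in>Qs. chi (- (c * v))) + (\<Sum>v\<in>NS. chi (- (c * v))) = -1"
    using dis fin_Qs fin_NS by (simp add: sum.union_disjoint)
  have "(\<Sum>v\<in>Rs. et v * chi (- (c * v))) = et c * H" by (rule H_c[OF c])
  moreover have "(\<Sum>v\<in>Rs. et v * chi (- (c * v))) = (\<Sum>v\<in>Qs. chi (- (c * v))) - (\<Sum>v\<in>NS. chi (- (c * v)))"
  proof -
    have "(\<Sum>v\<in>Rs. et v * chi (- (c * v))) = (\<Sum>v\<in>Qs. et v * chi (- (c * v))) + (\<Sum>v\<in>NS. et v * chi (- (c * v)))"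
      using dis fin_Qs fin_NS by (simp add: sum.union_disjoint)
    also have "(\<Sum>v\<in>Qs. et v * chi (- (c * v))) = (\<Sum>v\<in>Qs. chi (- (c * v)))"
      by (rule sum.cong) (auto simp: et_def quad_Qs)
    also have "(\<Sum>v\<in>NS. et v * chi (- (c * v))) = - (\<Sum>v\<in>NS. chi (- (c * v)))"
      by (simp add: et_def quad_NS sum_negf[symmetric])
    finally show ?thesis by simp
  qed
  ultimately have s2: "(\<Sum>v\<in>Qs. chi (- (c * v))) - (\<Sum>v\<in>NS. chi (- (c * v))) = et c * H" by simp
  have gen: "A + G = -1 \<Longrightarrow> A - G = X \<Longrightarrow> 2 * G = -1 - X" for A G X :: complex
    by (simp add: algebra_simps mult_2)
  show ?thesis by (rule gen[OF s1 s2])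
qed

lemma E_zero:
  assumes "b \<noteq> 0"
  shows "(\<Sum>x\<in>UNIV. psi (b * x) * chi (0 * T (N x))) = 0"
  using charsum_all[OF assms] by (simp add: chi_0)

lemma S_formula:
  assumes b: "b \<noteq> 0"
  shows "(\<Sum>x\<in>{x. T (N x) \<in> NS}. psi (b * x)) =
         - (of_nat q / of_nat r) * (\<Sum>c\<in>Rs. chi (- T (N b) / c) * (\<Sum>v\<in>NS. chi (- (c * v))))"
proof -
  let ?E = "\<lambda>c. (\<Sum>x\<in>UNIV. psi (b * x) * chi (c * T (N x)))"
  have r0: "(of_nat r :: complex) \<noteq> 0" using r_gt1 by simp
  have "(\<Sum>x\<in>{x. T (N x) \<in> NS}. psi (b * x)) = (\<Sum>x\<in>UNIV. if T (N x) \<in> NS then psi (b * x) else 0)"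
    using sum.inter_filter[of "UNIV :: 'a set" "\<lambda>x. psi (b * x)" "\<lambda>x. T (N x) \<in> NS"] by simp
  also have "\<dots> = (\<Sum>x\<in>UNIV. psi (b * x) * (\<Sum>v\<in>NS. \<Sum>c\<in>sub r. chi (c * T (N x)) * chi (- (c * v))) / of_nat r)"
  proof (rule sum.cong[OF refl])
    fix x :: 'a
    have "T (N x) \<in> sub r" by (rule T_in[OF N_in])
    then show "(if T (N x) \<in> NS then psi (b * x) else 0) =
       psi (b * x) * (\<Sum>v\<in>NS. \<Sum>c\<in>sub r. chi (c * T (N x)) * chi (- (c * v))) / of_nat r"
      using r0 by (simp add: indicator_NS)
  qed
  also have "\<dots> = (\<Sum>x\<in>UNIV. \<Sum>v\<in>NS. \<Sum>c\<in>sub r. psi (b * x) * chi (c * T (N x)) * chi (- (c * v)) / of_nat r)"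
    by (simp add: sum_distrib_left sum_divide_distrib mult.assoc)
  also have "\<dots> = (\<Sum>v\<in>NS. \<Sum>c\<in>sub r. \<Sum>x\<in>UNIV. psi (b * x) * chi (c * T (N x)) * chi (- (c * v)) / of_nat r)"
    by (subst sum.swap) (subst (2) sum.swap, rule refl)
  also have "\<dots> = (\<Sum>v\<in>NS. \<Sum>c\<in>sub r. ?E c * chi (- (c * v)) / of_nat r)"
    by (simp add: sum_distrib_right sum_divide_distrib)
  also have "\<dots> = (\<Sum>v\<in>NS. \<Sum>c\<in>Rs. ?E c * chi (- (c * v)) / of_nat r)"
  proof (rule sum.cong[OF refl])
    fix v
    have "(\<Sum>c\<in>sub r. ?E c * chi (- (c * v)) / of_nat r) =
          ?E 0 * chi (- (0 * v)) / of_nat r + (\<Sum>c\<in>sub r - {0}. ?E c * chi (- (c * v)) / of_nat r)"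
      using sub_r_0 by (simp add: sum.remove[of _ 0])
    then show "(\<Sum>c\<in>sub r. ?E c * chi (- (c * v)) / of_nat r) = (\<Sum>c\<in>Rs. ?E c * chi (- (c * v)) / of_nat r)"
      using E_zero[OF b] by (simp add: Rs_def)
  qed
  also have "\<dots> = (\<Sum>v\<in>NS. \<Sum>c\<in>Rs. - (of_nat q / of_nat r) * (chi (- T (N b) / c) * chi (- (c * v))))"
    by (intro sum.cong refl) (simp add: E_formula[OF b] Rs_sub Rs_ne0)
  also have "\<dots> = - (of_nat q / of_nat r) * (\<Sum>c\<in>Rs. chi (- T (N b) / c) * (\<Sum>v\<in>NS. chi (- (c * v))))"
    by (subst sum.swap) (simp add: sum_distrib_left)
  finally show ?thesis .
qed

lemma main_bound:
  assumes b: "b \<noteq> 0"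
  shows "norm (\<Sum>x\<in>{x. T (N x) \<in> NS}. psi (b * x)) \<le> real q * ((real r + 1) / (2 * real r))"
proof -
  define u where "u = T (N b)"
  have u: "u \<in> sub r" unfolding u_def by (rule T_in[OF N_in])
  define A where "A = (\<Sum>c\<in>Rs. chi (- u / c))"
  define B where "B = (\<Sum>c\<in>Rs. chi (- u / c) * et c)"
  define \<Sigma> where "\<Sigma> = (\<Sum>c\<in>Rs. chi (- u / c) * (\<Sum>v\<in>NS. chi (- (c * v))))"
  have "2 * \<Sigma> = (\<Sum>c\<in>Rs. chi (- u / c) * (2 * (\<Sum>v\<in>NS. chi (- (c * v)))))"
    unfolding \<Sigma>_def by (simp add: sum_distrib_left mult.left_commute)
  also have "\<dots> = (\<Sum>c\<in>Rs. chi (- u / c) * (-1 - et c * H))"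
    by (intro sum.cong refl) (simp add: G_formula)
  also have "\<dots> = - A - H * B"
    unfolding A_def B_def by (simp add: algebra_simps sum_subtractf sum_distrib_left sum_negf)
  finally have S2: "2 * \<Sigma> = - A - H * B" .
  have AB: "norm A + norm H * norm B \<le> 1 + real r"
  proof (cases "u = 0")
    case True
    have "A = of_nat (r - 1)" unfolding A_def True by (simp add: chi_0 card_Rs)
    then have "norm A = real (r - 1)" by (simp only: norm_of_nat)
    moreover have "B = 0" unfolding B_def True using et_sum by (simp add: chi_0)
    ultimately show ?thesis using r_gt1 by simp
  next
    case False
    then have uR: "u \<in> Rs" using u by (simp add: Rs_def)
    have u0: "u \<noteq> 0" by fact
    have "A = (\<Sum>d\<in>Rs. chi (1 * d))"
      unfolding A_def
    proof (rule sum.reindex_bij_witness[of _ "\<lambda>d. - u / d" "\<lambda>c. - u / c"])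
      fix c assume c: "c \<in> Rs"
      show "- u / (- u / c) = c" using u0 Rs_ne0[OF c] by simp
      show "- u / c \<in> Rs" by (rule Rs_divide[OF Rs_neg[OF uR] c])
      show "chi (1 * (- u / c)) = chi (- u / c)" by simp
    next
      fix d assume d: "d \<in> Rs"
      show "- u / (- u / d) = d" using u0 Rs_ne0[OF d] by simp
      show "- u / d \<in> Rs" by (rule Rs_divide[OF Rs_neg[OF uR] d])
    qed
    also have "\<dots> = -1" using chisum_Rs[of 1] sub_1 by simp
    finally have A1: "A = -1" .
    have "B = (\<Sum>d\<in>Rs. et u * (et d * chi (- d)))"
      unfolding B_def
    proof (rule sum.reindex_bij_witness[of _ "\<lambda>d. u / d" "\<lambda>c. u / c"])
      fix c assume c: "c \<in> Rs"
      show "u / (u / c) = c" using u0 Rs_ne0[OF c] by simp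
      show "u / c \<in> Rs" by (rule Rs_divide[OF uR c])
      have e: "et (u / c) = et u * et c" using uR c by (simp add: et_divide)
      have "et u * (et (u / c) * chi (- (u / c))) = (et u * et u) * et c * chi (- (u / c))"
        unfolding e by (simp only: mult.assoc)
      also have "\<dots> = chi (- u / c) * et c" using et_sq[OF uR] by simp
      finally show "et u * (et (u / c) * chi (- (u / c))) = chi (- u / c) * et c" .
    next
      fix d assume d: "d \<in> Rs"
      show "u / (u / d) = d" using u0 Rs_ne0[OF d] by simp
      show "u / d \<in> Rs" by (rule Rs_divide[OF uR d])
    qed
    also have "\<dots> = et u * H" by (simp add: H_def sum_distrib_left)
    finally have "norm B = norm H" using norm_et[OF uR] by (simp add: norm_mult)
    then have "norm H * norm B = real r" using norm_H_sq by (simp add: power2_eq_square)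
    then show ?thesis using A1 by simp
  qed
  have "norm (2 * \<Sigma>) \<le> norm A + norm H * norm B"
    unfolding S2 using norm_triangle_ineq4[of "- A" "H * B"] by (simp add: norm_mult)
  then have Sig: "norm \<Sigma> \<le> (1 + real r) / 2" using AB by (simp add: norm_mult)
  have "(\<Sum>x\<in>{x. T (N x) \<in> NS}. psi (b * x)) = - (of_nat q / of_nat r) * \<Sigma>"
    unfolding \<Sigma>_def u_def by (rule S_formula[OF b])
  then have "norm (\<Sum>x\<in>{x. T (N x) \<in> NS}. psi (b * x)) = (real q / real r) * norm \<Sigma>"
    by (simp add: norm_mult norm_divide)
  also have "\<dots> \<le> (real q / real r) * ((1 + real r) / 2)"
    by (rule mult_left_mono[OF Sig]) simp
  also have "\<dots> = real q * ((real r + 1) / (2 * real r))" by (simp add: field_simps)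
  finally show ?thesis .
qed

end

context ffq
begin
lemma D_char:
  shows "{x::'a. quad_char r (rel_trace r s (x ^ (q + 1))) = -1} = {x. T (N x) \<in> NS}"
proof -
  show ?thesis
  proof (intro Collect_cong iffI)
    fix x :: 'a
    have y: "T (N x) \<in> sub r" by (rule T_in[OF N_in])
    have eq: "rel_trace r s (x ^ (q + 1)) = T (N x)" by (simp add: T_def N_def)
    show "T (N x) \<in> NS" if "quad_char r (rel_trace r s (x ^ (q + 1))) = -1"
    proof -
      have q: "quad_char r (T (N x)) = -1" using that eq by simp
      then have "T (N x) \<noteq> 0" by (auto simp: quad_char_def)
      then have "T (N x) \<in> Rs" using y by (simp add: Rs_def)
      moreover have "T (N x) \<notin> Qs" using q quad_Qs by force
      ultimately show ?thesis by (simp add: NS_def)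
    qed
    show "quad_char r (rel_trace r s (x ^ (q + 1))) = -1" if "T (N x) \<in> NS"
      using quad_NS[OF that] eq by simp
  qed
qed
end

theorem mainTheorem7:
  fixes p t s :: nat
    and D :: "'a::{field,finite} set"
    and K r q :: nat
    and c :: "'a \<Rightarrow> 'a \<Rightarrow> complex"
  assumes "prime p" and "odd p"
    and "t > 0" and "s > 0"
    and "r = p ^ t" and "q = r ^ s"
    and "CHAR('a) = p" and "CARD('a) = q ^ 2"
    and "D = {x. quad_char r (rel_trace r s (x ^ (q + 1))) = -1}"
    and "K = card D"
    and "\<And>a x. c a x = (1 / sqrt (real K)) *
           zeta_pow p (prime_field_nat p (abs_trace p (2 * t * s) (a * x)))"
  shows "Max {cmod (\<Sum>x\<in>D. c a x * cnj (c a' x)) | a a'. a \<noteq> a'}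
           \<le> (1 / real K) * ((real r + 1) / (2 * real r)) * real q"
proof -
  note A = assms
  interpret F: ffq p "2 * t * s" "TYPE('a)" t s r q
  proof (unfold_locales)
    show "prime p" "odd p" "CHAR('a) = p" "t > 0" "s > 0" "r = p ^ t" "q = r ^ s" "2 * t * s = 2 * t * s"
      using A by auto
    show "0 < 2 * t * s" using A by simp
    have "q ^ 2 = p ^ (t * s * 2)" using A(5,6) by (simp add: power_mult)
    also have "t * s * 2 = 2 * t * s" by simp
    finally show "CARD('a) = p ^ (2 * t * s)" using A(8) by simp
  qed
  have D: "D = {x. F.T (F.N x) \<in> F.NS}" using F.D_char A by simp
  have cx: "c a x = complex_of_real (1 / sqrt (real K)) * F.psi (a * x)" for a x
    using A(11)[of a x] by (simp add: F.psi_def F.ee_def abs_trace_def rel_trace_def)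
  have trm: "cmod (\<Sum>x\<in>D. c a x * cnj (c a' x)) \<le> (1 / real K) * ((real r + 1) / (2 * real r)) * real q"
    if "a \<noteq> a'" for a a'
  proof -
    have "c a x * cnj (c a' x) = complex_of_real (1 / real K) * F.psi ((a - a') * x)" for x
    proof -
      have sq: "1 / sqrt (real K) * (1 / sqrt (real K)) = 1 / real K"
        by (simp flip: inverse_eq_divide inverse_mult_distrib)
      have "c a x * cnj (c a' x) = complex_of_real (1 / sqrt (real K)) * complex_of_real (1 / sqrt (real K)) * (F.psi (a * x) * F.psi (- (a' * x)))"
        unfolding cx complex_cnj_mult complex_cnj_complex_of_real F.psi_neg by (simp only: mult_ac)
      also have "complex_of_real (1 / sqrt (real K)) * complex_of_real (1 / sqrt (real K)) = complex_of_real (1 / real K)"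
        by (simp only: of_real_mult[symmetric] sq)
      also have "F.psi (a * x) * F.psi (- (a' * x)) = F.psi ((a - a') * x)"
      proof -
        have "(a - a') * x = a * x + - (a' * x)" by (simp add: algebra_simps)
        then show ?thesis by (simp only: F.psi_add)
      qed
      finally show ?thesis .
    qed
    then have "(\<Sum>x\<in>D. c a x * cnj (c a' x)) = complex_of_real (1 / real K) * (\<Sum>x\<in>D. F.psi ((a - a') * x))"
      by (simp add: sum_distrib_left)
    then have "cmod (\<Sum>x\<in>D. c a x * cnj (c a' x)) = (1 / real K) * cmod (\<Sum>x\<in>D. F.psi ((a - a') * x))"
      by (simp only: norm_mult norm_of_real) simp
    also have "\<dots> \<le> (1 / real K) * (real q * ((real r + 1) / (2 * real r)))"
      using F.main_bound[of "a - a'"] that D by (intro mult_left_mono) auto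
    finally show ?thesis by (simp add: mult_ac)
  qed
  have fin: "finite {cmod (\<Sum>x\<in>D. c a x * cnj (c a' x)) | a a'. a \<noteq> a'}"
  proof -
    have "{cmod (\<Sum>x\<in>D. c a x * cnj (c a' x)) | a a'. a \<noteq> a'} \<subseteq>
          (\<lambda>(a, a'). cmod (\<Sum>x\<in>D. c a x * cnj (c a' x))) ` UNIV" by auto
    then show ?thesis by (rule finite_subset) simp
  qed
  have ne: "{cmod (\<Sum>x\<in>D. c a x * cnj (c a' x)) | a a'. a \<noteq> a'} \<noteq> {}"
  proof -
    have "(0::'a) \<noteq> 1" by simp
    then show ?thesis by blast
  qed
  show ?thesis using fin ne trm by (subst Max_le_iff) auto
qed

end
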